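(* Let $N\ge 2$ and consider $N$ agents with discrete-time double-integrator dynamics $$p_i^{(k+1)}=p_i^{(k)}+v_i^{(k)},\qquad v_i^{(k+1)}=v_i^{(k)}+u_i^{(k)},\qquad i=1,\dots,N,\ k=0,1,2,\dots,$$ with $p_i^{(k)},v_i^{(k)}\in\mathbb{R}$, under the control law $$u_i^{(k)}=\gamma_1\sum_{j=1}^N a_{ij}^{(k)}\big(p_j^{(k)}-p_i^{(k)}\big)+\gamma_2\sum_{j=1}^N a_{ij}^{(k)}\big(v_j^{(k)}-v_i^{(k)}\big),$$ where for each $k$ the matrix $\mathcal{A}^{(k)}=(a_{ij}^{(k)})$ is a real symmetric $N\times N$ matrix with nonnegative entries and zero diagonal. Equivalently, with $x^{(k)}=((p^{(k)})^\top,(v^{(k)})^\top)^\top$, $x^{(k+1)}=F^{(k)}x^{(k)}$ where $F^{(k)}=\begin{pmatrix} I_N & I_N\\ -\gamma_1L^{(k)} & I_N-\gamma_2L^{(k)}\end{pmatrix}$ and $L^{(k)}$ is the Laplacian of $\mathcal{A}^{(k)}$. Assume the undirected graph with adjacency matrix $\mathcal{A}^{(0)}$ is connected, and that $$\gamma_2>\gamma_1>0,\qquad \gamma_1-2\gamma_2>-\frac{4}{\mu_i^{(0)}}\ \text{ for every nonzero eigenvalue }\mu_i^{(0)}\text{ of }L^{(0)}.$$ Then there exists $\delta_A>0$ such that, whenever $\|\mathcal{A}^{(k)}-\mathcal{A}^{(0)}\|_{\max}<\delta_A$ for all $k\ge 0$ (where $\|M\|_{\max}=\max_{i,j}|M_{ij}|$),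 the agents reach consensus for every initial condition, i.e. $\lim_{k\to\infty}(p_i^{(k)}-p_j^{(k)})=0$ and $\lim_{k\to\infty}(v_i^{(k)}-v_j^{(k)})=0$ for all $i,j$.
   Context: The Laplacian $L=(l_{ij})$ of a symmetric nonnegative matrix $\mathcal{A}=(a_{ij})$ with zero diagonal is defined by $l_{ij}=-a_{ij}$ for $i\ne j$ and $l_{ii}=\sum_{j\ne i}a_{ij}$. The graph associated with $\mathcal{A}$ has an edge between $i$ and $j$ iff $a_{ij}>0$. The sampling time is normalized to $1$. *)

theory Defs
  imports "HOL-Analysis.Analysis"
begin

definition adj_matrix :: "real^'n^'n \<Rightarrow> bool" where
  "adj_matrix A \<longleftrightarrow> (\<forall>i j. A $ i $ j = A $ j $ i) \<and> (\<forall>i j. 0 \<le> A $ i $ j) \<and> (\<forall>i. A $ i $ i = 0)"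

definition laplacian :: "real^'n^'n \<Rightarrow> real^'n^'n" where
  "laplacian A = (\<chi> i j. if i = j then (\<Sum>k\<in>UNIV - {i}. A $ i $ k) else - A $ i $ j)"

definition graph_connected :: "real^'n^'n \<Rightarrow> bool" where
  "graph_connected A \<longleftrightarrow> (\<forall>i j. (\<lambda>x y. A $ x $ y > 0)\<^sup>*\<^sup>* i j)"

definition max_norm :: "real^'n^'n \<Rightarrow> real" where
  "max_norm M = Max {\<bar>M $ i $ j\<bar> | i j. True}"

definition is_eigenvalue :: "real^'n^'n \<Rightarrow> real \<Rightarrow> bool" where
  "is_eigenvalue M \<mu> \<longleftrightarrow> (\<exists>x. x \<noteq> 0 \<and> M *v x = \<mu> *\<^sub>R x)"

end

theory Submission
  imports Defs
begin


lemma eig_exists: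
  fixes f :: "'a::euclidean_space \<Rightarrow> 'a"
  assumes lin: "linear f" and sym: "\<And>x y. f x \<bullet> y = x \<bullet> f y"
    and S: "subspace S" and inv: "\<And>x. x \<in> S \<Longrightarrow> f x \<in> S" and ne: "S \<noteq> {0}"
  shows "\<exists>u\<in>S. norm u = 1 \<and> f u = (u \<bullet> f u) *\<^sub>R u"
proof -
  let ?K = "S \<inter> sphere 0 1"
  have cK: "compact ?K" using closed_subspace[OF S] compact_sphere by (rule closed_Int_compact)
  obtain x where x: "x \<in> S" "x \<noteq> 0" using ne subspace_0[OF S] by blast
  have "x /\<^sub>R norm x \<in> ?K" using x S by (simp add: subspace_scale)
  then have neK: "?K \<noteq> {}" by blast
  have cf: "continuous_on ?K f" using lin by (simp add: linear_continuous_on linear_conv_bounded_linear)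
  have "continuous_on ?K (\<lambda>x. x \<bullet> f x)" by (intro continuous_intros cf)
  then obtain u where uK: "u \<in> ?K" and umax: "\<And>y. y \<in> ?K \<Longrightarrow> y \<bullet> f y \<le> u \<bullet> f u"
    using continuous_attains_sup[OF cK neK] by blast
  define m where "m = u \<bullet> f u"
  have uS: "u \<in> S" and un: "norm u = 1" using uK by auto
  have uu: "u \<bullet> u = 1" using un by (simp add: norm_eq_1)
  have bound: "y \<bullet> f y \<le> m * (y \<bullet> y)" if yS: "y \<in> S" for y
  proof (cases "y = 0")
    case True then show ?thesis using lin by (simp add: linear_0)
  next
    case False
    let ?y = "y /\<^sub>R norm y"
    have "?y \<in> ?K" using yS False S by (simp add: subspace_scale)
    then have "?y \<bullet> f ?y \<le> m" using umax m_def by blast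
    moreover have "?y \<bullet> f ?y = (y \<bullet> f y) / (norm y)^2"
      using lin by (simp add: linear_scale power2_eq_square divide_inverse)
    moreover have "y \<bullet> y = (norm y)^2" by (simp add: power2_norm_eq_inner)
    moreover have "(norm y)^2 > 0" using False by simp
    ultimately show ?thesis by (simp add: divide_le_eq mult.commute)
  qed
  define w where "w = f u - m *\<^sub>R u"
  have wS: "w \<in> S" unfolding w_def using uS inv S by (simp add: subspace_diff subspace_scale)
  define c where "c = w \<bullet> f w - m * (w \<bullet> w)"
  have key: "2 * t * (w \<bullet> w) + t^2 * c \<le> 0" for t
  proof -
    have "(u + t *\<^sub>R w) \<bullet> f (u + t *\<^sub>R w) \<le> m * ((u + t *\<^sub>R w) \<bullet> (u + t *\<^sub>R w))"
      using bound wS uS S by (simp add: subspace_add subspace_scale)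
    moreover have "f (u + t *\<^sub>R w) = f u + t *\<^sub>R f w" using lin by (simp add: linear_add linear_scale)
    moreover have "u \<bullet> f w = w \<bullet> f u" using sym[of u w] by (simp add: inner_commute)
    moreover have "w \<bullet> f u - m * (w \<bullet> u) = w \<bullet> w" unfolding w_def
      by (simp add: inner_diff_right inner_diff_left inner_commute algebra_simps)
    ultimately show ?thesis using uu unfolding c_def m_def
      by (simp add: inner_add_left inner_add_right inner_commute power2_eq_square algebra_simps)
  qed
  have "w = 0"
  proof (rule ccontr)
    assume "w \<noteq> 0"
    then have W: "w \<bullet> w > 0" by simp
    define t where "t = (w \<bullet> w) / (\<bar>c\<bar> + 1)"
    have t: "t > 0" using W by (simp add: t_def)
    have "t * \<bar>c\<bar> < w \<bullet> w" unfolding t_def using W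
      by (simp add: divide_simps)
    have k: "2 * t * (w \<bullet> w) + t^2 * c \<le> 0" by (rule key)
    have "t * (2 * (w \<bullet> w) + t * c) \<le> 0" using k by (simp add: power2_eq_square algebra_simps)
    then have "2 * (w \<bullet> w) + t * c \<le> 0" using t by (simp add: mult_le_0_iff)
    moreover have "t * c \<ge> - (t * \<bar>c\<bar>)" using t by (simp add: abs_if)
    ultimately show False using \<open>t * \<bar>c\<bar> < w \<bullet> w\<close> W by linarith
  qed
  then have "f u = m *\<^sub>R u" by (simp add: w_def)
  then show ?thesis using uS un m_def by blast
qed

lemma spectral:
  fixes f :: "'a::euclidean_space \<Rightarrow> 'a"
  assumes lin: "linear f" and sym: "\<And>x y. f x \<bullet> y = x \<bullet> f y"
  shows "subspace S \<Longrightarrow> (\<And>x. x \<in> S \<Longrightarrow> f x \<in> S) \<Longrightarrow>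
     \<exists>B. finite B \<and> B \<subseteq> S - {0} \<and> (\<forall>u\<in>B. \<exists>\<mu>. f u = \<mu> *\<^sub>R u) \<and> (\<forall>x\<in>S. x = (\<Sum>u\<in>B. (u \<bullet> x) *\<^sub>R u))"
proof (induction "dim S" arbitrary: S rule: less_induct)
  case less
  show ?case
  proof (cases "S = {0}")
    case True
    then show ?thesis by (intro exI[of _ "{}"]) auto
  next
    case False
    obtain u where uS: "u \<in> S" and un: "norm u = 1" and ue: "f u = (u \<bullet> f u) *\<^sub>R u"
      using eig_exists[OF lin sym less.prems(1) less.prems(2) False] by blast
    have uu: "u \<bullet> u = 1" using un by (simp add: norm_eq_1)
    define S' where "S' = {x \<in> S. u \<bullet> x = 0}"
    have sub': "subspace S'" using less.prems(1) unfolding S'_def subspace_def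
      by (auto simp: inner_add_right)
    have inv': "f x \<in> S'" if "x \<in> S'" for x
    proof -
      have "u \<bullet> f x = f u \<bullet> x" using sym[of u x] by simp
      also have "\<dots> = (u \<bullet> f u) * (u \<bullet> x)" by (subst ue) simp
      finally show ?thesis using that less.prems(2) unfolding S'_def by auto
    qed
    have "u \<notin> S'" using uu unfolding S'_def by auto
    then have "S' \<subset> S" using uS unfolding S'_def by blast
    then have "dim S' < dim S"
      using dim_psubset span_eq_iff sub' less.prems(1) by metis
    then obtain B where B: "finite B" "B \<subseteq> S' - {0}" "\<forall>u\<in>B. \<exists>\<mu>. f u = \<mu> *\<^sub>R u"
      "\<forall>x\<in>S'. x = (\<Sum>u\<in>B. (u \<bullet> x) *\<^sub>R u)"
      using less.hyps[OF _ sub' inv'] by blast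
    have uB: "u \<notin> B" using B(2) uu unfolding S'_def by auto
    have orth: "w \<bullet> u = 0" if "w \<in> B" for w using that B(2) unfolding S'_def by (auto simp: inner_commute)
    show ?thesis
    proof (intro exI[of _ "insert u B"] conjI ballI)
      show "finite (insert u B)" using B(1) by simp
      show "insert u B \<subseteq> S - {0}" using B(2) uS un unfolding S'_def by auto
      show "\<exists>\<mu>. f w = \<mu> *\<^sub>R w" if "w \<in> insert u B" for w using that ue B(3) by blast
      fix x assume xS: "x \<in> S"
      define x' where "x' = x - (u \<bullet> x) *\<^sub>R u"
      have "x' \<in> S'" unfolding S'_def x'_def using xS uS less.prems(1) uu
        by (simp add: subspace_diff subspace_scale inner_diff_right)
      then have "x' = (\<Sum>w\<in>B. (w \<bullet> x') *\<^sub>R w)" using B(4) by blast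
      also have "\<dots> = (\<Sum>w\<in>B. (w \<bullet> x) *\<^sub>R w)"
        by (rule sum.cong) (auto simp: x'_def inner_diff_right orth)
      finally have "x = (u \<bullet> x) *\<^sub>R u + (\<Sum>w\<in>B. (w \<bullet> x) *\<^sub>R w)" unfolding x'_def
        by (simp add: algebra_simps)
      then show "x = (\<Sum>w\<in>insert u B. (w \<bullet> x) *\<^sub>R w)" using B(1) uB by simp
    qed
  qed
qed



lemma scalar_lyap:
  fixes g h :: real
  assumes g: "0 < g" and gh: "g < h" and st: "4 - 2*h + g > 0"
  shows "\<exists>a b c. c > 0 \<and> (\<forall>p v. a*p^2 + 2*b*p* v + v^2 \<ge> 0) \<and>
    (\<forall>p v. (a*p^2 + 2*b*p* v + v^2) - (a*(p+v)^2 + 2*b*(p+v)*(-g*p+(1-h)* v) + (-g*p+(1-h)* v)^2) \<ge> c*(p^2+v^2))"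
proof -
  define D where "D = 2 - h + g"
  define N where "N = h*(2-h) - g*(1-h)"
  have D: "D > 0" using st g unfolding D_def by linarith
  have "N - g*D/2 = (h-g)*(4-2*h+g)/2" unfolding N_def D_def by (simp add: field_simps)
  also have "\<dots> > 0" using gh st by simp
  finally have ND: "N - g*D/2 > 0" .
  define bm where "bm = N / D"
  have bm: "bm - g/2 > 0" using ND D unfolding bm_def by (simp add: field_simps)
  define t where "t = min h ((bm - g/2)/2)"
  have t0: "t > 0" using bm gh g unfolding t_def by simp
  have th: "t \<le> h" unfolding t_def by simp
  have t2: "t \<le> (bm - g/2)/2" unfolding t_def by (rule min.cobounded2)
  have tb: "g/2 + t < bm" using bm t2 by argo
  define b where "b = g/2 + t"
  define a where "a = b*(h+g) + g*(1-h)"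
  have det: "a - b^2 = g*(4+g-2*h)/4 + t*(h-t)" unfolding a_def b_def
    by (simp add: power2_eq_square field_simps)
  have det0: "a - b^2 \<ge> 0" unfolding det using g st t0 th by (simp add: add_nonneg_nonneg)
  have Y: "N - b*D > 0" using tb D unfolding b_def bm_def by (simp add: field_simps)
  define c where "c = min (2*g*t) (N - b*D)"
  have c0: "c > 0" unfolding c_def using Y g t0 by simp
  have P1: "\<forall>p v. a*p^2 + 2*b*p* v + v^2 \<ge> 0"
  proof (intro allI)
    fix p v :: real
    have "a*p^2 + 2*b*p* v + v^2 = (v + b*p)^2 + (a - b^2)*p^2" by (simp add: power2_eq_square algebra_simps)
    then show "a*p^2 + 2*b*p* v + v^2 \<ge> 0" using det0 by simp
  qed
  have P2: "\<forall>p v. (a*p^2 + 2*b*p* v + v^2) - (a*(p+v)^2 + 2*b*(p+v)*(-g*p+(1-h)* v) + (-g*p+(1-h)* v)^2) \<ge> c*(p^2+v^2)"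
  proof (intro allI)
    fix p v :: real
    have "(a*p^2 + 2*b*p* v + v^2) - (a*(p+v)^2 + 2*b*(p+v)*(-g*p+(1-h)* v) + (-g*p+(1-h)* v)^2)
        = (2*g*t)*p^2 + (N - b*D)* v^2"
      unfolding a_def N_def D_def b_def by (simp add: power2_eq_square field_simps)
    moreover have "(2*g*t)*p^2 \<ge> c*p^2" unfolding c_def by (rule mult_right_mono) auto
    moreover have "(N - b*D)* v^2 \<ge> c* v^2" unfolding c_def by (rule mult_right_mono) auto
    ultimately show "(a*p^2 + 2*b*p* v + v^2) - (a*(p+v)^2 + 2*b*(p+v)*(-g*p+(1-h)* v) + (-g*p+(1-h)* v)^2) \<ge> c*(p^2+v^2)"
      by (simp add: algebra_simps)
  qed
  show ?thesis using P1 P2 c0 by blast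
qed



definition lap :: "real^'n^'n \<Rightarrow> real^'n \<Rightarrow> real^'n" where
  "lap A x = (\<chi> i. \<Sum>j\<in>UNIV. A$i$j * (x$i - x$j))"

lemma lap_eq:
  assumes "adj_matrix A" shows "laplacian A *v x = lap A x"
proof -
  have diag: "\<And>i. A$i$i = 0" using assms by (simp add: adj_matrix_def)
  { fix i
    have "(laplacian A *v x)$i = (\<Sum>j\<in>UNIV. laplacian A $i$j * x$j)"
      by (simp add: matrix_vector_mult_def)
    also have "\<dots> = laplacian A$i$i * x$i + (\<Sum>j\<in>UNIV-{i}. laplacian A$i$j * x$j)"
      by (simp add: sum.remove)
    also have "\<dots> = (\<Sum>j\<in>UNIV-{i}. A$i$j) * x$i + (\<Sum>j\<in>UNIV-{i}. - A$i$j * x$j)"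
      by (simp add: laplacian_def sum_distrib_left)
    also have "\<dots> = (\<Sum>j\<in>UNIV-{i}. A$i$j * (x$i - x$j))"
      by (simp add: sum_distrib_right sum_distrib_left sum.distrib[symmetric] algebra_simps sum_negf)
    also have "\<dots> = (\<Sum>j\<in>UNIV. A$i$j * (x$i - x$j))"
      by (simp add: sum.remove[of UNIV i "\<lambda>j. A$i$j * (x$i - x$j)"] diag)
    finally have "(laplacian A *v x)$i = lap A x $ i" by (simp add: lap_def) }
  then show ?thesis by (simp add: vec_eq_iff)
qed

lemma lap_linear: "linear (lap A)"
  by (rule linearI) (simp_all add: lap_def vec_eq_iff sum.distrib[symmetric] sum_distrib_left algebra_simps)

lemma lap_sub: "lap A x - lap A0 x = lap (A - A0) x"
  by (simp add: lap_def vec_eq_iff sum_subtractf[symmetric] algebra_simps)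

lemma lap_const: "lap A (\<chi> i. c) = 0"
  by (simp add: lap_def vec_eq_iff)

lemma lap_sym:
  assumes "adj_matrix A" shows "lap A x \<bullet> y = x \<bullet> lap A y"
proof -
  have s: "\<And>i j. A$i$j = A$j$i" using assms by (simp add: adj_matrix_def)
  have "(\<Sum>i\<in>UNIV. \<Sum>j\<in>UNIV. A$i$j * x$j * y$i) = (\<Sum>j\<in>UNIV. \<Sum>i\<in>UNIV. A$i$j * x$j * y$i)"
    by (rule sum.swap)
  also have "\<dots> = (\<Sum>j\<in>UNIV. \<Sum>i\<in>UNIV. A$j$i * x$j * y$i)" using s by simp
  finally have sw: "(\<Sum>i\<in>UNIV. \<Sum>j\<in>UNIV. A$i$j * x$j * y$i) = (\<Sum>i\<in>UNIV. \<Sum>j\<in>UNIV. A$i$j * x$i * y$j)" .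
  have "lap A x \<bullet> y = (\<Sum>i\<in>UNIV. \<Sum>j\<in>UNIV. A$i$j * x$i * y$i) - (\<Sum>i\<in>UNIV. \<Sum>j\<in>UNIV. A$i$j * x$j * y$i)"
    by (simp add: lap_def inner_vec_def sum_distrib_right sum_distrib_left sum_subtractf[symmetric] algebra_simps)
  also have "\<dots> = (\<Sum>i\<in>UNIV. \<Sum>j\<in>UNIV. A$i$j * x$i * y$i) - (\<Sum>i\<in>UNIV. \<Sum>j\<in>UNIV. A$i$j * x$i * y$j)"
    by (simp only: sw)
  also have "\<dots> = x \<bullet> lap A y"
    by (simp add: lap_def inner_vec_def sum_distrib_right sum_distrib_left sum_subtractf[symmetric] algebra_simps)
  finally show ?thesis .
qed

lemma lap_quad:
  assumes "adj_matrix A" shows "2 * (x \<bullet> lap A x) = (\<Sum>i\<in>UNIV. \<Sum>j\<in>UNIV. A$i$j * (x$i - x$j)^2)"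
proof -
  have s: "\<And>i j. A$i$j = A$j$i" using assms by (simp add: adj_matrix_def)
  have "(\<Sum>i\<in>UNIV. \<Sum>j\<in>UNIV. A$i$j * x$j * (x$i - x$j)) = (\<Sum>j\<in>UNIV. \<Sum>i\<in>UNIV. A$i$j * x$j * (x$i - x$j))"
    by (rule sum.swap)
  also have "\<dots> = (\<Sum>j\<in>UNIV. \<Sum>i\<in>UNIV. A$j$i * x$j * (x$i - x$j))" using s by simp
  also have "\<dots> = - (x \<bullet> lap A x)"
    by (simp add: lap_def inner_vec_def sum_distrib_left sum_negf[symmetric] algebra_simps)
  finally have sw: "(\<Sum>i\<in>UNIV. \<Sum>j\<in>UNIV. A$i$j * x$j * (x$i - x$j)) = - (x \<bullet> lap A x)" .
  have "(\<Sum>i\<in>UNIV. \<Sum>j\<in>UNIV. A$i$j * (x$i - x$j)^2) =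
     (\<Sum>i\<in>UNIV. \<Sum>j\<in>UNIV. A$i$j * x$i * (x$i - x$j)) - (\<Sum>i\<in>UNIV. \<Sum>j\<in>UNIV. A$i$j * x$j * (x$i - x$j))"
    by (simp add: sum_subtractf[symmetric] power2_eq_square algebra_simps)
  also have "(\<Sum>i\<in>UNIV. \<Sum>j\<in>UNIV. A$i$j * x$i * (x$i - x$j)) = x \<bullet> lap A x"
    by (simp add: lap_def inner_vec_def sum_distrib_left algebra_simps)
  finally show ?thesis using sw by simp
qed

lemma lap_sum0:
  assumes "adj_matrix A" shows "(\<Sum>i\<in>UNIV. lap A x $ i) = 0"
proof -
  have "(\<Sum>i\<in>UNIV. lap A x $ i) = lap A x \<bullet> (\<chi> i. 1)" by (simp add: inner_vec_def)
  also have "\<dots> = 0" by (simp add: lap_sym[OF assms] lap_const)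
  finally show ?thesis .
qed

lemma conn_const:
  assumes "adj_matrix A" "graph_connected A" "x \<bullet> lap A x = 0"
  shows "x$i = x$j"
proof -
  have nn: "\<And>i j. 0 \<le> A$i$j" using assms(1) by (simp add: adj_matrix_def)
  have "(\<Sum>i\<in>UNIV. \<Sum>j\<in>UNIV. A$i$j * (x$i - x$j)^2) = 0"
    using lap_quad[OF assms(1), of x] assms(3) by simp
  then have z0: "\<forall>i\<in>UNIV. (\<Sum>j\<in>UNIV. A$i$j * (x$i - x$j)^2) = 0"
    by (subst (asm) sum_nonneg_eq_0_iff) (auto intro!: sum_nonneg simp: nn)
  have z: "A$i$j * (x$i - x$j)^2 = 0" for i j
    using z0 sum_nonneg_eq_0_iff[of UNIV "\<lambda>j. A$i$j * (x$i - x$j)^2"] nn by auto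
  have edge: "A$a$b > 0 \<Longrightarrow> x$a = x$b" for a b using z[of a b] by simp
  have "(\<lambda>a b. A $ a $ b > 0)\<^sup>*\<^sup>* i j" using assms(2) by (simp add: graph_connected_def)
  then show ?thesis
    by (induction rule: rtranclp_induct) (auto dest: edge)
qed



lemma pert_term:
  fixes bb P Q E nu np nq ne :: real
  assumes "\<bar>P\<bar> \<le> nu*np" "\<bar>Q\<bar> \<le> nu*nq" "\<bar>E\<bar> \<le> nu*ne" "nu \<ge> 0" "np \<ge> 0" "nq \<ge> 0" "ne \<ge> 0"
  shows "\<bar>2*bb*P*E + 2*Q*E + E^2\<bar> \<le> (2*\<bar>bb\<bar>+2) * nu^2 * (ne*(np+nq+ne))"
proof -
  have e0: "\<bar>E\<bar> \<ge> 0" by simp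
  have pe: "\<bar>P*E\<bar> \<le> (nu*np)*(nu*ne)" unfolding abs_mult
    using assms by (intro mult_mono) auto
  have qe: "\<bar>Q*E\<bar> \<le> (nu*nq)*(nu*ne)" unfolding abs_mult
    using assms by (intro mult_mono) auto
  have ee: "\<bar>E^2\<bar> \<le> (nu*ne)*(nu*ne)" unfolding power2_eq_square abs_mult
    using assms by (intro mult_mono) auto
  have "\<bar>2*bb*P*E + 2*Q*E + E^2\<bar> \<le> \<bar>2*bb*P*E\<bar> + \<bar>2*Q*E\<bar> + \<bar>E^2\<bar>" by linarith
  also have "\<bar>2*bb*P*E\<bar> = 2*\<bar>bb\<bar>*\<bar>P*E\<bar>" by (simp add: abs_mult)
  also have "\<bar>2*Q*E\<bar> = 2*\<bar>Q*E\<bar>" by (simp add: abs_mult)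
  also have "2*\<bar>bb\<bar>*\<bar>P*E\<bar> \<le> 2*\<bar>bb\<bar>*((nu*np)*(nu*ne))" using pe by (simp add: mult_left_mono)
  also have "2*\<bar>Q*E\<bar> \<le> 2*((nu*nq)*(nu*ne))" using qe by simp
  also note ee
  also have "2*\<bar>bb\<bar>*((nu*np)*(nu*ne)) + 2*((nu*nq)*(nu*ne)) + (nu*ne)*(nu*ne)
     \<le> (2*\<bar>bb\<bar>+2) * nu^2 * (ne*(np+nq+ne))"
  proof -
    have x: "0 \<le> nu^2 * ne" using assms by simp
    have "(2*\<bar>bb\<bar>+2) * nu^2 * (ne*(np+nq+ne)) - (2*\<bar>bb\<bar>*((nu*np)*(nu*ne)) + 2*((nu*nq)*(nu*ne)) + (nu*ne)*(nu*ne))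
       = (nu^2*ne) * (2*\<bar>bb\<bar>*nq + 2*\<bar>bb\<bar>*ne + 2*np + ne)"
      by (simp add: power2_eq_square algebra_simps)
    also have "\<dots> \<ge> 0" using x assms by (intro mult_nonneg_nonneg) auto
    finally show ?thesis by simp
  qed
  finally show ?thesis by simp
qed



lemma lap_bound:
  fixes D :: "real^'n^'n"
  assumes d: "\<forall>i j. \<bar>D$i$j\<bar> \<le> d"
  shows "norm (lap D y) \<le> 2 * real CARD('n)^2 * d * norm y"
proof -
  have comp: "\<bar>lap D y $ i\<bar> \<le> real CARD('n) * (2 * d * norm y)" for i
  proof -
    have "\<bar>lap D y $ i\<bar> = \<bar>\<Sum>j\<in>UNIV. D$i$j * (y$i - y$j)\<bar>" by (simp add: lap_def)
    also have "\<dots> \<le> (\<Sum>j\<in>UNIV. \<bar>D$i$j * (y$i - y$j)\<bar>)" by (rule sum_abs)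
    also have "\<dots> \<le> (\<Sum>j\<in>(UNIV::'n set). 2 * d * norm y)"
    proof (intro sum_mono)
      fix j
      have "\<bar>y$i - y$j\<bar> \<le> 2 * norm y"
        using component_le_norm_cart[of y i] component_le_norm_cart[of y j] by linarith
      then show "\<bar>D$i$j * (y$i - y$j)\<bar> \<le> 2 * d * norm y" unfolding abs_mult
        using d by (metis (no_types) abs_ge_zero mult.assoc mult_mono' mult.commute)
    qed
    also have "\<dots> = real CARD('n) * (2 * d * norm y)" by simp
    finally show ?thesis .
  qed
  have "norm (lap D y) \<le> (\<Sum>i\<in>UNIV. \<bar>lap D y $ i\<bar>)" by (rule norm_le_l1_cart)
  also have "\<dots> \<le> (\<Sum>i\<in>(UNIV::'n set). real CARD('n) * (2 * d * norm y))" by (rule sum_mono) (rule comp)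
  also have "\<dots> = 2 * real CARD('n)^2 * d * norm y" by (simp add: power2_eq_square)
  finally show ?thesis .
qed

lemma quad_diff:
  fixes a b P V E :: real
  shows "(a*P^2 + 2*b*P*(V+E) + (V+E)^2) - (a*P^2 + 2*b*P*V + V^2) = 2*b*P*E + 2*V*E + E^2"
  by (simp add: power2_eq_square algebra_simps)

lemma V_pert:
  fixes B :: "(real^'n) set"
  assumes "finite B"
  shows "\<bar>(\<Sum>u\<in>B. fa u * (u \<bullet> p)^2 + 2 * fb u * (u \<bullet> p) * (u \<bullet> (v + e)) + (u \<bullet> (v + e))^2)
        - (\<Sum>u\<in>B. fa u * (u \<bullet> p)^2 + 2 * fb u * (u \<bullet> p) * (u \<bullet> v) + (u \<bullet> v)^2)\<bar>
     \<le> (\<Sum>u\<in>B. (2*\<bar>fb u\<bar>+2) * norm u^2) * (norm e * (norm p + norm v + norm e))"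
proof -
  have eq: "\<And>u. (fa u * (u \<bullet> p)^2 + 2 * fb u * (u \<bullet> p) * (u \<bullet> (v + e)) + (u \<bullet> (v + e))^2)
        - (fa u * (u \<bullet> p)^2 + 2 * fb u * (u \<bullet> p) * (u \<bullet> v) + (u \<bullet> v)^2)
      = 2 * fb u * (u \<bullet> p) * (u \<bullet> e) + 2 * (u \<bullet> v) * (u \<bullet> e) + (u \<bullet> e)^2"
    unfolding inner_add_right by (rule quad_diff)
  have "(\<Sum>u\<in>B. fa u * (u \<bullet> p)^2 + 2 * fb u * (u \<bullet> p) * (u \<bullet> (v + e)) + (u \<bullet> (v + e))^2)
        - (\<Sum>u\<in>B. fa u * (u \<bullet> p)^2 + 2 * fb u * (u \<bullet> p) * (u \<bullet> v) + (u \<bullet> v)^2)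
      = (\<Sum>u\<in>B. 2 * fb u * (u \<bullet> p) * (u \<bullet> e) + 2 * (u \<bullet> v) * (u \<bullet> e) + (u \<bullet> e)^2)"
    unfolding sum_subtractf[symmetric] eq ..
  then have E1: "\<bar>(\<Sum>u\<in>B. fa u * (u \<bullet> p)^2 + 2 * fb u * (u \<bullet> p) * (u \<bullet> (v + e)) + (u \<bullet> (v + e))^2)
        - (\<Sum>u\<in>B. fa u * (u \<bullet> p)^2 + 2 * fb u * (u \<bullet> p) * (u \<bullet> v) + (u \<bullet> v)^2)\<bar>
      = \<bar>\<Sum>u\<in>B. 2 * fb u * (u \<bullet> p) * (u \<bullet> e) + 2 * (u \<bullet> v) * (u \<bullet> e) + (u \<bullet> e)^2\<bar>" by simp
  note E1
  also have "\<bar>\<Sum>u\<in>B. 2 * fb u * (u \<bullet> p) * (u \<bullet> e) + 2 * (u \<bullet> v) * (u \<bullet> e) + (u \<bullet> e)^2\<bar> \<le> (\<Sum>u\<in>B. \<bar>2 * fb u * (u \<bullet> p) * (u \<bullet> e) + 2 * (u \<bullet> v) * (u \<bullet> e) + (u \<bullet> e)^2\<bar>)"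
    by (rule sum_abs)
  also have "\<dots> \<le> (\<Sum>u\<in>B. (2*\<bar>fb u\<bar>+2) * norm u^2 * (norm e * (norm p + norm v + norm e)))"
  proof (rule sum_mono)
    fix u assume "u \<in> B"
    show "\<bar>2 * fb u * (u \<bullet> p) * (u \<bullet> e) + 2 * (u \<bullet> v) * (u \<bullet> e) + (u \<bullet> e)^2\<bar>
       \<le> (2*\<bar>fb u\<bar>+2) * norm u^2 * (norm e * (norm p + norm v + norm e))"
      apply (rule pert_term)
      apply (rule Cauchy_Schwarz_ineq2)+
      apply simp_all
      done
  qed
  also have "\<dots> = (\<Sum>u\<in>B. (2*\<bar>fb u\<bar>+2) * norm u^2) * (norm e * (norm p + norm v + norm e))"
    by (simp add: sum_distrib_right)
  finally show ?thesis .
qed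



definition lyok :: "real \<Rightarrow> real \<Rightarrow> real \<Rightarrow> real \<Rightarrow> real \<Rightarrow> bool" where
  "lyok g h a b c \<longleftrightarrow> c > 0 \<and> (\<forall>p v. a*p^2 + 2*b*p* v + v^2 \<ge> 0) \<and>
    (\<forall>p v. (a*p^2 + 2*b*p* v + v^2) - (a*(p+v)^2 + 2*b*(p+v)*(-g*p+(1-h)* v) + (-g*p+(1-h)* v)^2) \<ge> c*(p^2+v^2))"

definition prj :: "real^'n \<Rightarrow> real^'n" where
  "prj x = x - ((\<Sum>i\<in>UNIV. x$i) / real CARD('n)) *\<^sub>R (\<chi> i. 1)"

lemma prj_linear: "linear prj"
  by (rule linearI) (simp_all add: prj_def vec_eq_iff sum.distrib sum_distrib_left algebra_simps add_divide_distrib)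

lemma prj_sum: "(\<Sum>i\<in>UNIV. prj x $ i) = 0"
  by (simp add: prj_def sum_subtractf)

lemma prj_diff: "prj x $ i - prj x $ j = x$i - x$j"
  by (simp add: prj_def)

lemma prj_lap: "adj_matrix A \<Longrightarrow> prj (lap A y) = lap A y"
  by (simp add: prj_def lap_sum0)

lemma lap_prj:
  fixes A :: "real^'n^'n" shows "lap A (prj y) = lap A y"
proof -
  have "lap A (prj y) = lap A y - ((\<Sum>i\<in>UNIV. y$i) / real CARD('n)) *\<^sub>R lap A (\<chi> i. 1)"
    unfolding prj_def using lap_linear[of A] by (simp add: linear_diff linear_scale)
  then show ?thesis by (simp add: lap_const)
qed



lemma neg_sum: "(\<Sum>j\<in>S. a j * (x j - y)) = - (\<Sum>j\<in>S. a j * (y - x j))" for a x :: "'a \<Rightarrow> real"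
  by (simp add: sum_negf[symmetric] algebra_simps)

lemma max_norm_entry:
  fixes M :: "real^'n^'n"
  shows "\<bar>M$i$j\<bar> \<le> max_norm M"
proof -
  have e: "{\<bar>M$i$j\<bar> | i j. True} = (\<lambda>(i,j). \<bar>M$i$j\<bar>) ` UNIV" by auto
  have "finite {\<bar>M$i$j\<bar> | i j. True}" unfolding e by simp
  then show ?thesis unfolding max_norm_def by (rule Max_ge) blast
qed

theorem theorem1:
  fixes A0 :: "real^'n^'n" and \<gamma>1 \<gamma>2 :: real
  assumes "CARD('n) \<ge> 2"
    and "adj_matrix A0"
    and "graph_connected A0"
    and "\<gamma>2 > \<gamma>1" and "\<gamma>1 > 0"
    and "\<And>\<mu>. is_eigenvalue (laplacian A0) \<mu> \<Longrightarrow> \<mu> \<noteq> 0 \<Longrightarrow> \<gamma>1 - 2 * \<gamma>2 > - 4 / \<mu>"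
  shows "\<exists>\<delta>>0. \<forall>A :: nat \<Rightarrow> real^'n^'n.
           (\<forall>k. adj_matrix (A k) \<and> max_norm (A k - A0) < \<delta>) \<longrightarrow>
           (\<forall>p v :: nat \<Rightarrow> real^'n.
              (\<forall>k i. p (Suc k) $ i = p k $ i + v k $ i) \<longrightarrow>
              (\<forall>k i. v (Suc k) $ i = v k $ i
                 + \<gamma>1 * (\<Sum>j\<in>UNIV. A k $ i $ j * (p k $ j - p k $ i))
                 + \<gamma>2 * (\<Sum>j\<in>UNIV. A k $ i $ j * (v k $ j - v k $ i))) \<longrightarrow>
              (\<forall>i j. (\<lambda>k. p k $ i - p k $ j) \<longlonglongrightarrow> 0 \<and> (\<lambda>k. v k $ i - v k $ j) \<longlonglongrightarrow> 0))"
proof -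
  note A0 = assms(2)
  define W where "W = {x::real^'n. (\<Sum>i\<in>UNIV. x$i) = 0}"
  have subW: "subspace W" unfolding W_def subspace_def
    by (simp add: sum.distrib sum_distrib_left[symmetric])
  have invW: "\<And>x. x \<in> W \<Longrightarrow> lap A0 x \<in> W" unfolding W_def using lap_sum0[OF A0] by simp
  obtain B where B: "finite B" "B \<subseteq> W - {0}" "\<forall>u\<in>B. \<exists>\<mu>. lap A0 u = \<mu> *\<^sub>R u"
      "\<forall>x\<in>W. x = (\<Sum>u\<in>B. (u \<bullet> x) *\<^sub>R u)"
    using spectral[OF lap_linear lap_sym[OF A0] subW invW] by blast
  obtain \<mu> where \<mu>: "\<forall>u\<in>B. lap A0 u = \<mu> u *\<^sub>R u" using bchoice[OF B(3)] by blast
  have parse: "x \<bullet> x = (\<Sum>u\<in>B. (u \<bullet> x)^2)" if "x \<in> W" for x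
  proof -
    have e: "(\<Sum>u\<in>B. (u \<bullet> x) *\<^sub>R u) = x" using B(4) that by simp
    have "x \<bullet> x = x \<bullet> (\<Sum>u\<in>B. (u \<bullet> x) *\<^sub>R u)" by (simp add: e)
    also have "\<dots> = (\<Sum>u\<in>B. (u \<bullet> x) * (x \<bullet> u))" by (simp add: inner_sum_right)
    also have "\<dots> = (\<Sum>u\<in>B. (u \<bullet> x)^2)" by (simp add: inner_commute power2_eq_square)
    finally show ?thesis .
  qed
  have \<mu>pos: "\<mu> u > 0 \<and> (\<gamma>1 - 2*\<gamma>2) * \<mu> u > -4" if uB: "u \<in> B" for u
  proof -
    have u0: "u \<noteq> 0" and uW: "u \<in> W" using B(2) uB by auto
    have eu: "lap A0 u = \<mu> u *\<^sub>R u" using \<mu> uB by blast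
    have q: "u \<bullet> lap A0 u = \<mu> u * (u \<bullet> u)" using eu by simp
    have nn: "\<And>i j. 0 \<le> A0$i$j" using A0 by (simp add: adj_matrix_def)
    have "2 * (u \<bullet> lap A0 u) \<ge> 0" unfolding lap_quad[OF A0, of u]
      by (intro sum_nonneg mult_nonneg_nonneg nn) simp
    then have ge: "\<mu> u * (u \<bullet> u) \<ge> 0" using q by simp
    have uu: "u \<bullet> u > 0" using u0 by simp
    have mne: "\<mu> u \<noteq> 0"
    proof
      assume "\<mu> u = 0"
      then have "u \<bullet> lap A0 u = 0" using q by simp
      then have c: "\<And>i j. u$i = u$j" using conn_const[OF A0 assms(3)] by blast
      fix k :: 'n
      have "(\<Sum>i\<in>UNIV. u$i) = (\<Sum>i\<in>(UNIV::'n set). u$k)" by (rule sum.cong) (auto intro: c)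
      then have "(\<Sum>i\<in>UNIV. u$i) = real CARD('n) * u$k" by simp
      with uW have "u$k = 0" unfolding W_def by simp
      then have "u = 0" using c by (simp add: vec_eq_iff) metis
      with u0 show False by simp
    qed
    then have mp: "\<mu> u > 0" using ge uu by (simp add: zero_le_mult_iff)
    have "is_eigenvalue (laplacian A0) (\<mu> u)" unfolding is_eigenvalue_def
      using u0 eu lap_eq[OF A0] by auto
    then have "\<gamma>1 - 2*\<gamma>2 > -4 / \<mu> u" using assms(6) mne by blast
    from mult_strict_right_mono[OF this mp]
    have "(\<gamma>1 - 2*\<gamma>2) * \<mu> u > -4" using mne by simp
    with mp show ?thesis by simp
  qed
  have ex: "\<forall>u\<in>B. \<exists>a b c. lyok (\<gamma>1 * \<mu> u) (\<gamma>2 * \<mu> u) a b c"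
  proof
    fix u assume "u \<in> B"
    from \<mu>pos[OF this] have m: "\<mu> u > 0" "(\<gamma>1 - 2*\<gamma>2)*\<mu> u > -4" by auto
    have "0 < \<gamma>1 * \<mu> u" using assms(5) m by simp
    moreover have "\<gamma>1 * \<mu> u < \<gamma>2 * \<mu> u" using assms(4) m by simp
    moreover have "4 - 2*(\<gamma>2*\<mu> u) + \<gamma>1*\<mu> u > 0" using m(2) by (simp add: algebra_simps)
    ultimately show "\<exists>a b c. lyok (\<gamma>1 * \<mu> u) (\<gamma>2 * \<mu> u) a b c"
      unfolding lyok_def by (rule scalar_lyap)
  qed
  from bchoice[OF ex] obtain fa where "\<forall>u\<in>B. \<exists>b c. lyok (\<gamma>1 * \<mu> u) (\<gamma>2 * \<mu> u) (fa u) b c" by blast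
  from bchoice[OF this] obtain fb where "\<forall>u\<in>B. \<exists>c. lyok (\<gamma>1 * \<mu> u) (\<gamma>2 * \<mu> u) (fa u) (fb u) c" by blast
  from bchoice[OF this] obtain fc where ly: "\<forall>u\<in>B. lyok (\<gamma>1 * \<mu> u) (\<gamma>2 * \<mu> u) (fa u) (fb u) (fc u)" by blast
  define cm where "cm = Min (insert 1 (fc ` B))"
  have cm0: "cm > 0" unfolding cm_def using B(1) ly by (simp add: lyok_def)
  have cmle: "cm \<le> fc u" if "u \<in> B" for u unfolding cm_def using B(1) that by (intro Min_le) auto
  define V where "V p v = (\<Sum>u\<in>B. fa u * (u \<bullet> p)^2 + 2 * fb u * (u \<bullet> p) * (u \<bullet> v) + (u \<bullet> v)^2)"
    for p v :: "real^'n"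
  have V0: "V p v \<ge> 0" for p v unfolding V_def
  proof (rule sum_nonneg)
    fix u assume "u \<in> B"
    then have "\<forall>p v. fa u * p^2 + 2 * fb u * p * v + v^2 \<ge> 0" using ly by (simp add: lyok_def)
    then show "fa u * (u \<bullet> p)^2 + 2 * fb u * (u \<bullet> p) * (u \<bullet> v) + (u \<bullet> v)^2 \<ge> 0" by blast
  qed
  have ip: "u \<bullet> lap A0 y = \<mu> u * (u \<bullet> y)" if "u \<in> B" for u y
  proof -
    have "u \<bullet> lap A0 y = lap A0 u \<bullet> y" by (simp add: lap_sym[OF A0])
    also have "\<dots> = \<mu> u * (u \<bullet> y)" using \<mu> that by simp
    finally show ?thesis .
  qed
  have nom: "V p v - V (p + v) (v - \<gamma>1 *\<^sub>R lap A0 p - \<gamma>2 *\<^sub>R lap A0 v) \<ge> cm * (p \<bullet> p + v \<bullet> v)"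
    if pW: "p \<in> W" and vW: "v \<in> W" for p v
  proof -
    have tm: "(fa u * (u \<bullet> p)^2 + 2 * fb u * (u \<bullet> p) * (u \<bullet> v) + (u \<bullet> v)^2) -
       (fa u * (u \<bullet> (p+v))^2 + 2 * fb u * (u \<bullet> (p+v)) * (u \<bullet> (v - \<gamma>1 *\<^sub>R lap A0 p - \<gamma>2 *\<^sub>R lap A0 v))
         + (u \<bullet> (v - \<gamma>1 *\<^sub>R lap A0 p - \<gamma>2 *\<^sub>R lap A0 v))^2) \<ge> cm * ((u \<bullet> p)^2 + (u \<bullet> v)^2)"
      if uB: "u \<in> B" for u
    proof -
      have l: "lyok (\<gamma>1 * \<mu> u) (\<gamma>2 * \<mu> u) (fa u) (fb u) (fc u)" using ly uB by blast
      have e1: "u \<bullet> (p+v) = (u \<bullet> p) + (u \<bullet> v)" by (simp add: inner_add_right)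
      have e2: "u \<bullet> (v - \<gamma>1 *\<^sub>R lap A0 p - \<gamma>2 *\<^sub>R lap A0 v) = - (\<gamma>1 * \<mu> u) * (u \<bullet> p) + (1 - \<gamma>2 * \<mu> u) * (u \<bullet> v)"
        using ip[OF uB, of p] ip[OF uB, of v] by (simp add: inner_diff_right algebra_simps)
      have "(fa u * (u \<bullet> p)^2 + 2 * fb u * (u \<bullet> p) * (u \<bullet> v) + (u \<bullet> v)^2) -
       (fa u * (u \<bullet> (p+v))^2 + 2 * fb u * (u \<bullet> (p+v)) * (u \<bullet> (v - \<gamma>1 *\<^sub>R lap A0 p - \<gamma>2 *\<^sub>R lap A0 v))
         + (u \<bullet> (v - \<gamma>1 *\<^sub>R lap A0 p - \<gamma>2 *\<^sub>R lap A0 v))^2) \<ge> fc u * ((u \<bullet> p)^2 + (u \<bullet> v)^2)"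
        unfolding e1 e2 using l unfolding lyok_def by blast
      moreover have "fc u * ((u \<bullet> p)^2 + (u \<bullet> v)^2) \<ge> cm * ((u \<bullet> p)^2 + (u \<bullet> v)^2)"
        using cmle[OF uB] by (intro mult_right_mono) auto
      ultimately show ?thesis by linarith
    qed
    have "V p v - V (p + v) (v - \<gamma>1 *\<^sub>R lap A0 p - \<gamma>2 *\<^sub>R lap A0 v) =
      (\<Sum>u\<in>B. (fa u * (u \<bullet> p)^2 + 2 * fb u * (u \<bullet> p) * (u \<bullet> v) + (u \<bullet> v)^2) -
       (fa u * (u \<bullet> (p+v))^2 + 2 * fb u * (u \<bullet> (p+v)) * (u \<bullet> (v - \<gamma>1 *\<^sub>R lap A0 p - \<gamma>2 *\<^sub>R lap A0 v))
         + (u \<bullet> (v - \<gamma>1 *\<^sub>R lap A0 p - \<gamma>2 *\<^sub>R lap A0 v))^2))"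
      unfolding V_def by (rule sum_subtractf[symmetric])
    also have "\<dots> \<ge> (\<Sum>u\<in>B. cm * ((u \<bullet> p)^2 + (u \<bullet> v)^2))" by (rule sum_mono) (rule tm)
    also have "(\<Sum>u\<in>B. cm * ((u \<bullet> p)^2 + (u \<bullet> v)^2)) = cm * (p \<bullet> p + v \<bullet> v)"
      using parse[OF pW] parse[OF vW] by (simp add: sum_distrib_left[symmetric] sum.distrib)
    finally show ?thesis by simp
  qed
  obtain K0 where K0: "K0 > 0" "\<And>x. norm (lap A0 x) \<le> K0 * norm x"
    using linear_bounded_pos[OF lap_linear] by blast
  define K where "K = (\<Sum>u\<in>B. (2*\<bar>fb u\<bar>+2) * norm u^2)"
  have Kp: "K \<ge> 0" unfolding K_def by (intro sum_nonneg) simp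
  define E where "E = (\<gamma>1+\<gamma>2) * (2 * real CARD('n)^2)"
  have Ep: "E \<ge> 0" unfolding E_def using assms(4,5) by simp
  define R where "R = 2 + (\<gamma>1+\<gamma>2)*K0 + E"
  have Rp: "R \<ge> 0" unfolding R_def using assms(4,5) K0 Ep by simp
  define \<delta> where "\<delta> = min 1 (cm / (4*(K*E*R+1)))"
  have KER: "K*E*R \<ge> 0" using Kp Ep Rp by simp
  have d0: "\<delta> > 0" unfolding \<delta>_def using cm0 KER by simp
  have d1: "\<delta> \<le> 1" unfolding \<delta>_def by simp
  have d2: "\<delta> * (K*E*R) \<le> cm/4"
  proof -
    have "\<delta> \<le> cm / (4*(K*E*R+1))" unfolding \<delta>_def by simp
    then have "\<delta> * (K*E*R+1) \<le> cm / (4*(K*E*R+1)) * (K*E*R+1)"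
      using KER by (intro mult_right_mono) auto
    also have "\<dots> = cm/4" using KER by (simp add: field_simps)
    finally show ?thesis using d0 by (simp add: algebra_simps)
  qed
  have step: "V (p + v) (v - \<gamma>1 *\<^sub>R lap A p - \<gamma>2 *\<^sub>R lap A v) \<le> V p v - (cm/2) * (p \<bullet> p + v \<bullet> v)"
    if ent: "\<forall>i j. \<bar>(A - A0)$i$j\<bar> \<le> \<delta>" and pW: "p \<in> W" and vW: "v \<in> W" for A p v
  proof -
    define v' where "v' = v - \<gamma>1 *\<^sub>R lap A0 p - \<gamma>2 *\<^sub>R lap A0 v"
    define e where "e = - (\<gamma>1 *\<^sub>R lap (A - A0) p) - \<gamma>2 *\<^sub>R lap (A - A0) v"
    have ls: "lap A x = lap A0 x + lap (A - A0) x" for x using lap_sub[of A x A0] by (simp add: algebra_simps)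
    have vv: "v - \<gamma>1 *\<^sub>R lap A p - \<gamma>2 *\<^sub>R lap A v = v' + e"
      unfolding v'_def e_def ls by (simp add: scaleR_add_right algebra_simps)
    have nD: "norm (lap (A - A0) x) \<le> 2 * real CARD('n)^2 * \<delta> * norm x" for x
      by (rule lap_bound) (rule ent)
    define s where "s = norm p + norm v"
    have s0: "s \<ge> 0" unfolding s_def by simp
    have "norm e \<le> norm (\<gamma>1 *\<^sub>R lap (A - A0) p) + norm (\<gamma>2 *\<^sub>R lap (A - A0) v)"
      unfolding e_def by (metis norm_minus_cancel norm_triangle_ineq4 uminus_add_conv_diff)
    also have "\<dots> = \<gamma>1 * norm (lap (A - A0) p) + \<gamma>2 * norm (lap (A - A0) v)"
      using assms(4,5) by simp
    also have "\<dots> \<le> \<gamma>1 * (2 * real CARD('n)^2 * \<delta> * norm p) + \<gamma>2 * (2 * real CARD('n)^2 * \<delta> * norm v)"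
      using assms(4,5) nD by (intro add_mono mult_left_mono) auto
    also have "\<dots> \<le> E * \<delta> * s"
    proof -
      have a: "\<gamma>1 * norm p \<le> (\<gamma>1 + \<gamma>2) * s" "\<gamma>2 * norm v \<le> (\<gamma>1 + \<gamma>2) * s"
        unfolding s_def using assms(4,5) by (simp_all add: algebra_simps)
      have "\<gamma>1 * (2 * real CARD('n)^2 * \<delta> * norm p) + \<gamma>2 * (2 * real CARD('n)^2 * \<delta> * norm v)
          = (2 * real CARD('n)^2 * \<delta>) * (\<gamma>1 * norm p + \<gamma>2 * norm v)" by (simp add: algebra_simps)
      also have "\<dots> \<le> (2 * real CARD('n)^2 * \<delta>) * ((\<gamma>1 + \<gamma>2) * s)"
        using d0 assms(4,5) unfolding s_def by (intro mult_left_mono) (auto simp: algebra_simps)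
      also have "\<dots> = E * \<delta> * s" unfolding E_def by (simp add: algebra_simps)
      finally show ?thesis .
    qed
    finally have ne: "norm e \<le> E * \<delta> * s" .
    have nE: "norm e \<le> E * s"
    proof -
      have "E * \<delta> * s \<le> E * 1 * s" using d1 Ep s0 by (intro mult_right_mono mult_left_mono) auto
      then show ?thesis using ne by simp
    qed
    have np': "norm (p + v) \<le> s" unfolding s_def by (rule norm_triangle_ineq)
    have "norm v' \<le> norm v + norm (\<gamma>1 *\<^sub>R lap A0 p) + norm (\<gamma>2 *\<^sub>R lap A0 v)"
      unfolding v'_def by (metis (no_types, opaque_lifting) add_le_cancel_right norm_triangle_ineq4 order_trans add_mono order_refl)
    also have "\<dots> = norm v + \<gamma>1 * norm (lap A0 p) + \<gamma>2 * norm (lap A0 v)" using assms(4,5) by simp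
    also have "\<dots> \<le> norm v + \<gamma>1 * (K0 * norm p) + \<gamma>2 * (K0 * norm v)"
      using assms(4,5) K0 by (intro add_mono mult_left_mono) auto
    also have "\<dots> \<le> (1 + (\<gamma>1+\<gamma>2)*K0) * s"
      unfolding s_def using assms(4,5) K0 by (simp add: algebra_simps)
    finally have nv': "norm v' \<le> (1 + (\<gamma>1+\<gamma>2)*K0) * s" .
    have tot: "norm (p + v) + norm v' + norm e \<le> R * s"
      using np' nv' nE unfolding R_def by (simp add: algebra_simps)
    have pv: "\<bar>V (p + v) (v' + e) - V (p + v) v'\<bar> \<le> K * (norm e * (norm (p + v) + norm v' + norm e))"
      unfolding V_def K_def by (rule V_pert[OF B(1)])
    also have "\<dots> \<le> K * ((E * \<delta> * s) * (R * s))"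
      using Kp ne tot Ep d0 s0 by (intro mult_left_mono mult_mono) auto
    also have "\<dots> = (\<delta> * (K*E*R)) * s^2" by (simp add: power2_eq_square algebra_simps)
    also have "\<dots> \<le> (cm/4) * s^2" using d2 by (intro mult_right_mono) auto
    also have "\<dots> \<le> (cm/2) * (p \<bullet> p + v \<bullet> v)"
    proof -
      have "s^2 \<le> 2 * (norm p ^2 + norm v^2)" unfolding s_def
        using sum_squares_ge_zero[of "norm p - norm v" 0] by (simp add: power2_eq_square algebra_simps)
      then have "s^2 \<le> 2 * (p \<bullet> p + v \<bullet> v)" by (simp add: power2_norm_eq_inner)
      then show ?thesis using cm0 by (simp add: mult_left_mono)
    qed
    finally have pert: "V (p + v) (v' + e) \<le> V (p + v) v' + (cm/2) * (p \<bullet> p + v \<bullet> v)" by linarith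
    have "V (p + v) v' \<le> V p v - cm * (p \<bullet> p + v \<bullet> v)" using nom[OF pW vW] unfolding v'_def by linarith
    then show ?thesis unfolding vv using pert by linarith
  qed
  show ?thesis
  proof (intro exI[of _ \<delta>] conjI allI impI d0)
    fix A :: "nat \<Rightarrow> real^'n^'n" assume hA: "\<forall>k. adj_matrix (A k) \<and> max_norm (A k - A0) < \<delta>"
    fix p v :: "nat \<Rightarrow> real^'n"
    assume hp: "\<forall>k i. p (Suc k) $ i = p k $ i + v k $ i"
    assume hv: "\<forall>k i. v (Suc k) $ i = v k $ i
                 + \<gamma>1 * (\<Sum>j\<in>UNIV. A k $ i $ j * (p k $ j - p k $ i))
                 + \<gamma>2 * (\<Sum>j\<in>UNIV. A k $ i $ j * (v k $ j - v k $ i))"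
    fix i j :: 'n
    have ent: "\<forall>i j. \<bar>(A k - A0)$i$j\<bar> \<le> \<delta>" for k
      using hA max_norm_entry[of "A k - A0"] by (meson less_imp_le order_trans)
    have adjk: "adj_matrix (A k)" for k using hA by blast
    define P where "P k = prj (p k)" for k
    define Q where "Q k = prj (v k)" for k
    have pS: "p (Suc k) = p k + v k" for k using hp by (simp add: vec_eq_iff)
    have vS: "v (Suc k) = v k - \<gamma>1 *\<^sub>R lap (A k) (p k) - \<gamma>2 *\<^sub>R lap (A k) (v k)" for k
      using hv by (simp add: vec_eq_iff lap_def neg_sum)
    have PS: "P (Suc k) = P k + Q k" for k unfolding P_def Q_def pS by (simp add: linear_add[OF prj_linear])
    have QS: "Q (Suc k) = Q k - \<gamma>1 *\<^sub>R lap (A k) (P k) - \<gamma>2 *\<^sub>R lap (A k) (Q k)" for k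
      unfolding P_def Q_def vS
      by (simp add: linear_diff[OF prj_linear] linear_scale[OF prj_linear] prj_lap[OF adjk] lap_prj)
    have PW: "P k \<in> W" for k unfolding P_def W_def using prj_sum by simp
    have QW: "Q k \<in> W" for k unfolding Q_def W_def using prj_sum by simp
    define s where "s k = P k \<bullet> P k + Q k \<bullet> Q k" for k
    have dec: "V (P (Suc k)) (Q (Suc k)) \<le> V (P k) (Q k) - (cm/2) * s k" for k
      unfolding PS QS s_def by (rule step[OF ent PW QW])
    have tele: "V (P m) (Q m) + (cm/2) * (\<Sum>k<m. s k) \<le> V (P 0) (Q 0)" for m
    proof (induction m)
      case 0 then show ?case by simp
    next
      case (Suc m)
      then show ?case using dec[of m] by (simp add: algebra_simps)
    qed
    have s0: "s k \<ge> 0" for k unfolding s_def by simp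
    have sb: "(\<Sum>k<m. s k) \<le> 2 * V (P 0) (Q 0) / cm" for m
    proof -
      have "(cm/2) * (\<Sum>k<m. s k) \<le> V (P 0) (Q 0)" using tele[of m] V0[of "P m" "Q m"] by linarith
      then show ?thesis using cm0 by (simp add: field_simps)
    qed
    have "summable s" by (rule summableI_nonneg_bounded[OF s0 sb])
    then have "s \<longlonglongrightarrow> 0" by (rule summable_LIMSEQ_zero)
    then have "(\<lambda>k. sqrt (s k)) \<longlonglongrightarrow> sqrt 0" by (intro tendsto_intros)
    then have sq: "(\<lambda>k. 2 * sqrt (s k)) \<longlonglongrightarrow> 0" by (intro tendsto_mult_right_zero) simp
    have nP: "norm (P k) \<le> sqrt (s k)" and nQ: "norm (Q k) \<le> sqrt (s k)" for k
      unfolding s_def norm_eq_sqrt_inner by (auto intro: real_sqrt_le_mono)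
    have b1: "norm (p k $ i - p k $ j) \<le> 2 * sqrt (s k)" for k
    proof -
      have "p k $ i - p k $ j = P k $ i - P k $ j" unfolding P_def by (simp add: prj_diff)
      then have "norm (p k $ i - p k $ j) \<le> \<bar>P k $ i\<bar> + \<bar>P k $ j\<bar>" by simp
      also have "\<dots> \<le> norm (P k) + norm (P k)" by (intro add_mono component_le_norm_cart)
      finally show ?thesis using nP[of k] by simp
    qed
    have b2: "norm (v k $ i - v k $ j) \<le> 2 * sqrt (s k)" for k
    proof -
      have "v k $ i - v k $ j = Q k $ i - Q k $ j" unfolding Q_def by (simp add: prj_diff)
      then have "norm (v k $ i - v k $ j) \<le> \<bar>Q k $ i\<bar> + \<bar>Q k $ j\<bar>" by simp
      also have "\<dots> \<le> norm (Q k) + norm (Q k)" by (intro add_mono component_le_norm_cart)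
      finally show ?thesis using nQ[of k] by simp
    qed
    show "(\<lambda>k. p k $ i - p k $ j) \<longlonglongrightarrow> 0"
      by (rule Lim_null_comparison[OF _ sq]) (use b1 in \<open>auto intro: always_eventually\<close>)
    show "(\<lambda>k. v k $ i - v k $ j) \<longlonglongrightarrow> 0"
      by (rule Lim_null_comparison[OF _ sq]) (use b2 in \<open>auto intro: always_eventually\<close>)
  qed
qed


end
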